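(* Let $A \in \mathbb{C}^{N\times N}$ have an orthonormal basis of eigenvectors $\psi_1,\ldots,\psi_N$ with eigenvalues ordered so that $|\lambda_1|\ge\cdots\ge|\lambda_N|$ and $\lambda_m \neq 0$ for some $1\le m<N$. Let $\Psi_{\le m} = [\psi_1,\ldots,\psi_m]$ and $\Psi_{>m} = [\psi_{m+1},\ldots,\psi_N]$. Let $V \in \mathbb{C}^{N\times m}$ be such that $\Psi_{\le m}^{*}V$ is invertible, let $\Phi\in\mathbb{C}^{m\times m}$ be invertible, let $E \in \mathbb{C}^{N\times m}$, and set $V' = AV\Phi + E$. If $$\frac{\|E\|_2}{|\lambda_m|} < \left(\frac{1}{\kappa_2(\Psi_{\le m}^{*}V\Phi)} - \left|\frac{\lambda_{m+1}}{\lambda_m}\right|\right)\frac{\|\Psi_{\le m}^{*}V\Phi\|_2\,\|\Psi_{>m}^{*}V\Phi\|_2}{\|V\Phi\|_2},$$ then $\Theta(\mathcal{R}(V'),\mathcal{R}(\Psi_{\le m})) < \Theta(\mathcal{R}(V),\mathcal{R}(\Psi_{\le m}))$.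
   Context: $\|\cdot\|_2$ is the spectral norm, $\kappa_2(X) = \sigma_1(X)/\sigma_m(X)$ is the 2-norm condition number of $X\in\mathbb{C}^{m\times m}$, $\mathcal{R}(X)$ is the column space of $X$, and $^{*}$ denotes conjugate transpose. For $X\in\mathbb{C}^{N\times m}$ with $\Psi_{\le m}^{*}X$ invertible, $\Theta(\mathcal{R}(X),\mathcal{R}(\Psi_{\le m}))$ denotes the largest principal angle between $\mathcal{R}(X)$ and $\mathcal{R}(\Psi_{\le m})$, which satisfies $\tan\Theta(\mathcal{R}(X),\mathcal{R}(\Psi_{\le m})) = \sigma_1\big(\Psi_{>m}^{*}X(\Psi_{\le m}^{*}X)^{-1}\big)$, $\sigma_1$ denoting the largest singular value. In the application, $V'$ is the result of one step of inexact subspace iteration: $\Phi$ contains Ritz coefficients and $E$ is the accumulated perturbation (truncation) error. *)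

theory Defs
  imports "Jordan_Normal_Form.Schur_Decomposition"
begin

definition vnorm :: "complex vec \<Rightarrow> real" where
  "vnorm v = sqrt (\<Sum>i<dim_vec v. (cmod (v $ i))^2)"

definition spec_norm :: "complex mat \<Rightarrow> real" where
  "spec_norm X = Sup {vnorm (X *\<^sub>v x) | x. x \<in> carrier_vec (dim_col X) \<and> vnorm x = 1}"

text \<open>Smallest singular value sigma_m of a matrix with m columns (m \<le> rows).\<close>
definition smin :: "complex mat \<Rightarrow> real" where
  "smin X = Inf {vnorm (X *\<^sub>v x) | x. x \<in> carrier_vec (dim_col X) \<and> vnorm x = 1}"

definition cond2 :: "complex mat \<Rightarrow> real" where
  "cond2 X = spec_norm X / smin X"

definition minv :: "complex mat \<Rightarrow> complex mat" where
  "minv Y = (SOME B. B \<in> carrier_mat (dim_row Y) (dim_row Y) \<and>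
                      Y * B = 1\<^sub>m (dim_row Y) \<and> B * Y = 1\<^sub>m (dim_row Y))"

definition Psi_le :: "complex mat \<Rightarrow> nat \<Rightarrow> complex mat" where
  "Psi_le Psi m = mat (dim_row Psi) m (\<lambda>(i, j). Psi $$ (i, j))"

definition Psi_gt :: "complex mat \<Rightarrow> nat \<Rightarrow> complex mat" where
  "Psi_gt Psi m = mat (dim_row Psi) (dim_col Psi - m) (\<lambda>(i, j). Psi $$ (i, j + m))"

text \<open>tan of the largest principal angle between R(X) and R(Psi_{\<le>m}).\<close>
definition tan_theta :: "complex mat \<Rightarrow> nat \<Rightarrow> complex mat \<Rightarrow> real" where
  "tan_theta Psi m X =
     spec_norm (mat_adjoint (Psi_gt Psi m) * X * minv (mat_adjoint (Psi_le Psi m) * X))"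

definition theta :: "complex mat \<Rightarrow> nat \<Rightarrow> complex mat \<Rightarrow> real" where
  "theta Psi m X =
     (if invertible_mat (mat_adjoint (Psi_le Psi m) * X) then arctan (tan_theta Psi m X)
      else pi / 2)"

end

theory Submission
  imports Defs "HOL-Analysis.L2_Norm"
begin

lemma vnorm_L2: "vnorm v = L2_set (\<lambda>i. cmod (v $ i)) {..<dim_vec v}"
  unfolding vnorm_def L2_set_def by simp

lemma vnorm_nonneg[simp]: "vnorm v \<ge> 0"
  unfolding vnorm_def by (simp add: sum_nonneg)

lemma vnorm_sq: "(vnorm v)\<^sup>2 = (\<Sum>i<dim_vec v. (cmod (v $ i))\<^sup>2)"
  unfolding vnorm_def by (simp add: sum_nonneg)

lemma vnorm_add:
  assumes "u \<in> carrier_vec n" "v \<in> carrier_vec n"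
  shows "vnorm (u + v) \<le> vnorm u + vnorm v"
proof -
  have "vnorm (u + v) = L2_set (\<lambda>i. cmod (u $ i + v $ i)) {..<n}"
    using assms by (auto simp: vnorm_L2 intro!: L2_set_cong)
  also have "\<dots> \<le> L2_set (\<lambda>i. cmod (u $ i) + cmod (v $ i)) {..<n}"
    by (rule L2_set_mono) (auto intro: norm_triangle_ineq)
  also have "\<dots> \<le> L2_set (\<lambda>i. cmod (u $ i)) {..<n} + L2_set (\<lambda>i. cmod (v $ i)) {..<n}"
    by (rule L2_set_triangle_ineq)
  also have "\<dots> = vnorm u + vnorm v" using assms by (simp add: vnorm_L2)
  finally show ?thesis .
qed

lemma vnorm_smult: "vnorm (a \<cdot>\<^sub>v v) = cmod a * vnorm v"
proof -
  have "vnorm (a \<cdot>\<^sub>v v) = L2_set (\<lambda>i. cmod a * cmod (v $ i)) {..<dim_vec v}"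
    by (auto simp: vnorm_L2 norm_mult intro!: L2_set_cong)
  also have "\<dots> = cmod a * vnorm v" by (simp add: vnorm_L2 L2_set_right_distrib)
  finally show ?thesis .
qed

lemma vnorm_zero_iff:
  assumes "v \<in> carrier_vec n" shows "vnorm v = 0 \<longleftrightarrow> v = 0\<^sub>v n"
proof -
  have "vnorm v = 0 \<longleftrightarrow> (\<forall>i\<in>{..<n}. cmod (v $ i) = 0)"
    using assms by (simp add: vnorm_L2 L2_set_eq_0_iff)
  also have "\<dots> \<longleftrightarrow> v = 0\<^sub>v n" using assms by (auto intro!: eq_vecI)
  finally show ?thesis .
qed

lemma vnorm_minus:
  assumes "u \<in> carrier_vec n" "v \<in> carrier_vec n"
  shows "vnorm u - vnorm v \<le> vnorm (u + v)"
proof -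
  have "u = (u + v) + (- v)" using assms by auto
  hence "vnorm u \<le> vnorm (u + v) + vnorm (- v)"
    by (metis assms add_carrier_vec uminus_carrier_vec vnorm_add)
  moreover have "vnorm (- v) = vnorm v" by (auto simp: vnorm_L2 intro!: L2_set_cong)
  ultimately show ?thesis by simp
qed

lemma vnorm_unit_vec: "vnorm (unit_vec n i) = (if i < n then 1 else 0)"
proof -
  have "(\<Sum>j<n. (cmod (unit_vec n i $ j))\<^sup>2) = (\<Sum>j<n. if j = i then 1 else 0)"
    by (intro sum.cong) (auto simp: unit_vec_def)
  thus ?thesis unfolding vnorm_def by auto
qed

lemma entry_le_vnorm: "j < dim_vec x \<Longrightarrow> cmod (x $ j) \<le> vnorm x"
  unfolding vnorm_L2 by (rule member_le_L2_set) auto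

lemma vnorm_mult_crude:
  assumes M: "M \<in> carrier_mat r c" and x: "x \<in> carrier_vec c"
  shows "vnorm (M *\<^sub>v x) \<le> (\<Sum>i<r. \<Sum>j<c. cmod (M $$ (i,j))) * vnorm x"
proof -
  have d: "dim_vec (M *\<^sub>v x) = r" using M by simp
  have "vnorm (M *\<^sub>v x) \<le> (\<Sum>i<r. cmod ((M *\<^sub>v x) $ i))"
    unfolding vnorm_L2 d by (rule L2_set_le_sum) simp
  also have "\<dots> \<le> (\<Sum>i<r. (\<Sum>j<c. cmod (M $$ (i,j))) * vnorm x)"
  proof (rule sum_mono)
    fix i assume i: "i \<in> {..<r}"
    have "(M *\<^sub>v x) $ i = (\<Sum>j<c. M $$ (i,j) * x $ j)"
      using M x i by (auto simp: mult_mat_vec_def scalar_prod_def lessThan_atLeast0)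
    hence "cmod ((M *\<^sub>v x) $ i) \<le> (\<Sum>j<c. cmod (M $$ (i,j) * x $ j))"
      by (simp add: norm_sum)
    also have "\<dots> \<le> (\<Sum>j<c. cmod (M $$ (i,j)) * vnorm x)"
      using x by (auto intro!: sum_mono mult_left_mono entry_le_vnorm simp: norm_mult)
    finally show "cmod ((M *\<^sub>v x) $ i) \<le> (\<Sum>j<c. cmod (M $$ (i,j))) * vnorm x"
      by (simp add: sum_distrib_right)
  qed
  also have "\<dots> = (\<Sum>i<r. \<Sum>j<c. cmod (M $$ (i,j))) * vnorm x"
    by (simp add: sum_distrib_right)
  finally show ?thesis .
qed

definition nset :: "complex mat \<Rightarrow> real set" where
  "nset X = {vnorm (X *\<^sub>v x) | x. x \<in> carrier_vec (dim_col X) \<and> vnorm x = 1}"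

lemma spec_norm_nset: "spec_norm X = Sup (nset X)"
  unfolding spec_norm_def nset_def by simp

lemma smin_nset: "smin X = Inf (nset X)"
  unfolding smin_def nset_def by simp

lemma nset_bdd: "bdd_above (nset M)"
proof -
  have M: "M \<in> carrier_mat (dim_row M) (dim_col M)" by auto
  show ?thesis 
  proof (rule bdd_aboveI)
    fix a assume "a \<in> nset M"
    then obtain x where "x \<in> carrier_vec (dim_col M)" "vnorm x = 1" "a = vnorm (M *\<^sub>v x)"
      unfolding nset_def by auto
    thus "a \<le> (\<Sum>i<dim_row M. \<Sum>j<dim_col M. cmod (M $$ (i,j)))"
      using vnorm_mult_crude[OF M] by fastforce
  qed
qed

lemma nset_bdd_below: "bdd_below (nset M)"
  by (rule bdd_belowI[of _ 0]) (auto simp: nset_def)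

lemma nset_ne: "dim_col M > 0 \<Longrightarrow> nset M \<noteq> {}"
  unfolding nset_def using vnorm_unit_vec[of "dim_col M" 0]
  by (auto intro!: exI[of _ "unit_vec (dim_col M) 0"])

lemma spec_norm_nonneg:
  assumes "dim_col M > 0" shows "spec_norm M \<ge> 0"
proof -
  obtain a where "a \<in> nset M" using nset_ne[OF assms] by auto
  moreover have "a \<ge> 0" using \<open>a \<in> nset M\<close> unfolding nset_def by auto
  ultimately show ?thesis unfolding spec_norm_nset
    using cSup_upper[OF _ nset_bdd] by (meson order_trans)
qed

lemma spec_norm_least:
  assumes "dim_col M > 0"
    and "\<And>x. x \<in> carrier_vec (dim_col M) \<Longrightarrow> vnorm x = 1 \<Longrightarrow> vnorm (M *\<^sub>v x) \<le> b"
  shows "spec_norm M \<le> b"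
  unfolding spec_norm_nset
  by (rule cSup_least[OF nset_ne[OF assms(1)]]) (auto simp: nset_def assms(2))

lemma normalize_vec:
  assumes x: "x \<in> carrier_vec c" and nz: "vnorm x \<noteq> 0"
  shows "vnorm ((1 / complex_of_real (vnorm x)) \<cdot>\<^sub>v x) = 1"
  using nz by (simp add: vnorm_smult norm_divide)

lemma spec_norm_upper:
  assumes M: "M \<in> carrier_mat r c" and x: "x \<in> carrier_vec c"
  shows "vnorm (M *\<^sub>v x) \<le> spec_norm M * vnorm x"
proof (cases "vnorm x = 0")
  case True
  hence "x = 0\<^sub>v c" using vnorm_zero_iff[OF x] by simp
  hence "M *\<^sub>v x = 0\<^sub>v r" using M by auto
  hence "vnorm (M *\<^sub>v x) = 0" using vnorm_zero_iff[of "M *\<^sub>v x" r] by auto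
  thus ?thesis using True by simp
next
  case False
  let ?k = "1 / complex_of_real (vnorm x)"
  let ?y = "?k \<cdot>\<^sub>v x"
  have y: "?y \<in> carrier_vec (dim_col M)" "vnorm ?y = 1" using M x normalize_vec[OF x False] by auto
  hence "vnorm (M *\<^sub>v ?y) \<in> nset M" unfolding nset_def by auto
  hence le: "vnorm (M *\<^sub>v ?y) \<le> spec_norm M" unfolding spec_norm_nset by (rule cSup_upper[OF _ nset_bdd])
  have "M *\<^sub>v ?y = ?k \<cdot>\<^sub>v (M *\<^sub>v x)" using M x by (simp add: mult_mat_vec)
  hence "vnorm (M *\<^sub>v ?y) = vnorm (M *\<^sub>v x) / vnorm x" by (simp add: vnorm_smult norm_divide)
  with le have "vnorm (M *\<^sub>v x) / vnorm x \<le> spec_norm M" by simp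
  moreover have "vnorm x > 0" using False vnorm_nonneg[of x] by linarith
  ultimately show ?thesis by (simp add: divide_le_eq)
qed

lemma smin_lower:
  assumes M: "M \<in> carrier_mat r c" and x: "x \<in> carrier_vec c"
  shows "smin M * vnorm x \<le> vnorm (M *\<^sub>v x)"
proof (cases "vnorm x = 0")
  case True
  thus ?thesis by simp
next
  case False
  let ?k = "1 / complex_of_real (vnorm x)"
  let ?y = "?k \<cdot>\<^sub>v x"
  have y: "?y \<in> carrier_vec (dim_col M)" "vnorm ?y = 1" using M x normalize_vec[OF x False] by auto
  hence "vnorm (M *\<^sub>v ?y) \<in> nset M" unfolding nset_def by auto
  hence le: "smin M \<le> vnorm (M *\<^sub>v ?y)" unfolding smin_nset by (rule cInf_lower[OF _ nset_bdd_below])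
  have "M *\<^sub>v ?y = ?k \<cdot>\<^sub>v (M *\<^sub>v x)" using M x by (simp add: mult_mat_vec)
  hence "vnorm (M *\<^sub>v ?y) = vnorm (M *\<^sub>v x) / vnorm x" by (simp add: vnorm_smult norm_divide)
  with le have "smin M \<le> vnorm (M *\<^sub>v x) / vnorm x" by simp
  moreover have "vnorm x > 0" using False vnorm_nonneg[of x] by linarith
  ultimately show ?thesis by (simp add: le_divide_eq)
qed

lemma sum_split_at:
  fixes f :: "nat \<Rightarrow> 'a::comm_monoid_add"
  assumes "m \<le> N"
  shows "(\<Sum>i<N. f i) = (\<Sum>i<m. f i) + (\<Sum>i<N-m. f (i+m))"
proof -
  have "(\<Sum>i<N. f i) = sum f {0..<m} + sum f {m..<N}"
    using sum.atLeastLessThan_concat[of 0 m N f] assms by (simp add: lessThan_atLeast0)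
  moreover have "sum f {m..<N} = sum f {0+m..<(N-m)+m}" using assms by simp
  moreover have "\<dots> = (\<Sum>i<N-m. f (i+m))"
    by (simp only: sum.shift_bounds_nat_ivl lessThan_atLeast0)
  ultimately show ?thesis by (simp add: lessThan_atLeast0)
qed

lemma adj_carrier: "A \<in> carrier_mat r c \<Longrightarrow> mat_adjoint A \<in> carrier_mat c r"
  unfolding mat_adjoint_def by auto

lemma adj_dims[simp]: "dim_row (mat_adjoint A) = dim_col A" "dim_col (mat_adjoint A) = dim_row A"
  unfolding mat_adjoint_def by auto

lemma adj_index[simp]: "i < dim_col A \<Longrightarrow> j < dim_row A \<Longrightarrow> mat_adjoint A $$ (i,j) = cnj (A $$ (j,i))"
  unfolding mat_adjoint_def by (simp add: mat_of_rows_index)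

lemma adj_adj[simp]: "mat_adjoint (mat_adjoint A) = (A :: complex mat)"
proof (rule eq_matI)
  fix i j assume "i < dim_row A" "j < dim_col A"
  hence "mat_adjoint (mat_adjoint A) $$ (i,j) = cnj (mat_adjoint A $$ (j,i))"
    by (intro adj_index) auto
  also have "\<dots> = A $$ (i,j)" using \<open>i < dim_row A\<close> \<open>j < dim_col A\<close> by simp
  finally show "mat_adjoint (mat_adjoint A) $$ (i,j) = A $$ (i,j)" .
qed auto

lemma cmod_sq_complex: "complex_of_real ((cmod z)\<^sup>2) = z * cnj z"
  by (rule complex_norm_square)

lemma vnorm_sq_complex:
  "complex_of_real ((vnorm v)\<^sup>2) = (\<Sum>i<dim_vec v. v $ i * cnj (v $ i))"
  unfolding vnorm_sq of_real_sum by (intro sum.cong refl) (rule cmod_sq_complex)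

lemma vnorm_unitary:
  assumes U: "U \<in> carrier_mat n k" and UU: "mat_adjoint U * U = 1\<^sub>m k" and v: "v \<in> carrier_vec k"
  shows "vnorm (U *\<^sub>v v) = vnorm v"
proof -
  have e: "(U *\<^sub>v v) $ i = (\<Sum>j<k. U $$ (i,j) * v $ j)" if "i < n" for i
    using U v that by (auto simp: mult_mat_vec_def scalar_prod_def lessThan_atLeast0)
  have d: "(\<Sum>i<n. cnj (U $$ (i,l)) * U $$ (i,j)) = (if l = j then 1 else 0)" if "l < k" "j < k" for l j
  proof -
    have "(mat_adjoint U * U) $$ (l,j) = (\<Sum>i<n. cnj (U $$ (i,l)) * U $$ (i,j))"
      using U that by (auto simp: scalar_prod_def lessThan_atLeast0 intro!: sum.cong)
    thus ?thesis using UU that by simp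
  qed
  have "complex_of_real ((vnorm (U *\<^sub>v v))\<^sup>2)
      = (\<Sum>i<n. (\<Sum>j<k. U $$ (i,j) * v $ j) * cnj (\<Sum>l<k. U $$ (i,l) * v $ l))"
    unfolding vnorm_sq_complex using U by (auto simp del: index_mult_mat_vec simp: e intro!: sum.cong)
  also have "\<dots> = (\<Sum>i<n. \<Sum>l<k. \<Sum>j<k. (v $ j * cnj (v $ l)) * (cnj (U $$ (i,l)) * U $$ (i,j)))"
    by (simp add: sum_distrib_left sum_distrib_right ac_simps)
  also have "\<dots> = (\<Sum>l<k. \<Sum>j<k. (v $ j * cnj (v $ l)) * (\<Sum>i<n. cnj (U $$ (i,l)) * U $$ (i,j)))"
    by (simp only: sum_distrib_left sum.swap[of _ "{..<n}"])
  also have "\<dots> = (\<Sum>l<k. \<Sum>j<k. if l = j then v $ j * cnj (v $ l) else 0)"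
    by (intro sum.cong refl) (simp add: d)
  also have "\<dots> = (\<Sum>j<k. v $ j * cnj (v $ j))"
    by (simp add: sum.delta)
  also have "\<dots> = complex_of_real ((vnorm v)\<^sup>2)" unfolding vnorm_sq_complex using v by simp
  finally have "(vnorm (U *\<^sub>v v))\<^sup>2 = (vnorm v)\<^sup>2" using of_real_eq_iff by blast
  thus ?thesis by (simp add: power2_eq_iff_nonneg)
qed

lemma adj_mult_vec_index:
  assumes X: "X \<in> carrier_mat r c" and v: "v \<in> carrier_vec r" and i: "i < c"
  shows "(mat_adjoint X *\<^sub>v v) $ i = (\<Sum>j<r. cnj (X $$ (j,i)) * v $ j)"
  using X v i by (auto simp: scalar_prod_def lessThan_atLeast0 intro!: sum.cong)

lemma Psi_le_carrier: "Psi \<in> carrier_mat N N \<Longrightarrow> Psi_le Psi m \<in> carrier_mat N m"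
  unfolding Psi_le_def by auto

lemma Psi_gt_carrier: "Psi \<in> carrier_mat N N \<Longrightarrow> Psi_gt Psi m \<in> carrier_mat N (N - m)"
  unfolding Psi_gt_def by auto

lemma unitary_other:
  assumes Psi: "Psi \<in> carrier_mat N N" and orth: "mat_adjoint Psi * Psi = 1\<^sub>m N"
  shows "Psi * mat_adjoint Psi = 1\<^sub>m N"
  using mat_mult_left_right_inverse[OF adj_carrier[OF Psi] Psi orth] .

lemma split_norm:
  assumes Psi: "Psi \<in> carrier_mat N N" and orth: "mat_adjoint Psi * Psi = 1\<^sub>m N"
    and mN: "m \<le> N" and v: "v \<in> carrier_vec N"
  shows "(vnorm (mat_adjoint (Psi_le Psi m) *\<^sub>v v))\<^sup>2 + (vnorm (mat_adjoint (Psi_gt Psi m) *\<^sub>v v))\<^sup>2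
         = (vnorm v)\<^sup>2"
proof -
  let ?P = "mat_adjoint Psi *\<^sub>v v"
  have PP: "mat_adjoint (mat_adjoint Psi) * mat_adjoint Psi = 1\<^sub>m N"
    using unitary_other[OF Psi orth] by simp
  have nP: "vnorm ?P = vnorm v"
    by (rule vnorm_unitary[OF adj_carrier[OF Psi] PP v])
  have e1: "(mat_adjoint (Psi_le Psi m) *\<^sub>v v) $ i = ?P $ i" if "i < m" for i
    using that mN
    by (simp add: adj_mult_vec_index[OF Psi_le_carrier[OF Psi] v]
        adj_mult_vec_index[OF Psi v]) (use Psi in \<open>auto simp: Psi_le_def intro!: sum.cong\<close>)
  have e2: "(mat_adjoint (Psi_gt Psi m) *\<^sub>v v) $ i = ?P $ (i + m)" if "i < N - m" for i
    using that mN
    by (simp add: adj_mult_vec_index[OF Psi_gt_carrier[OF Psi] v]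
        adj_mult_vec_index[OF Psi v]) (use Psi in \<open>auto simp: Psi_gt_def intro!: sum.cong\<close>)
  have "(vnorm (mat_adjoint (Psi_le Psi m) *\<^sub>v v))\<^sup>2 = (\<Sum>i<m. (cmod (?P $ i))\<^sup>2)"
    unfolding vnorm_sq using Psi_le_carrier[OF Psi, of m] by (auto simp del: index_mult_mat_vec simp: e1 intro!: sum.cong)
  moreover have "(vnorm (mat_adjoint (Psi_gt Psi m) *\<^sub>v v))\<^sup>2 = (\<Sum>i<N-m. (cmod (?P $ (i+m)))\<^sup>2)"
    unfolding vnorm_sq using Psi_gt_carrier[OF Psi, of m] by (auto simp del: index_mult_mat_vec simp: e2 intro!: sum.cong)
  moreover have "(vnorm ?P)\<^sup>2 = (\<Sum>i<N. (cmod (?P $ i))\<^sup>2)"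
    unfolding vnorm_sq using Psi by simp
  ultimately show ?thesis using nP sum_split_at[OF mN, of "\<lambda>i. (cmod (?P $ i))\<^sup>2"] by simp
qed

lemma eig_coords:
  fixes A Psi :: "complex mat" and lam :: "nat \<Rightarrow> complex"
  assumes A: "A \<in> carrier_mat N N" and Psi: "Psi \<in> carrier_mat N N"
    and orth: "mat_adjoint Psi * Psi = 1\<^sub>m N"
    and eig: "\<forall>j<N. A *\<^sub>v col Psi j = lam j \<cdot>\<^sub>v col Psi j"
    and u: "u \<in> carrier_vec N" and i: "i < N"
  shows "(mat_adjoint Psi *\<^sub>v (A *\<^sub>v u)) $ i = lam i * (mat_adjoint Psi *\<^sub>v u) $ i"
proof -
  define D where "D = mat N N (\<lambda>(i,j). if i = j then lam i else (0::complex))"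
  have D: "D \<in> carrier_mat N N" unfolding D_def by auto
  have Ps: "mat_adjoint Psi \<in> carrier_mat N N" using adj_carrier[OF Psi] .
  have AP: "A * Psi = Psi * D"
  proof (rule eq_matI)
    fix a b assume a: "a < dim_row (Psi * D)" and b: "b < dim_col (Psi * D)"
    hence ab: "a < N" "b < N" using Psi D by auto
    have "(A * Psi) $$ (a,b) = (A *\<^sub>v col Psi b) $ a" using A Psi ab by simp
    also have "\<dots> = lam b * Psi $$ (a,b)" using eig ab Psi by simp
    also have "\<dots> = (\<Sum>k\<in>{0..<N}. Psi $$ (a,k) * (if k = b then lam k else 0))"
      using ab by (simp add: if_distrib[of "\<lambda>x. Psi $$ (a,_) * x"] sum.delta' mult.commute cong: if_cong)
    also have "\<dots> = (Psi * D) $$ (a,b)" using Psi D ab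
      by (auto simp: D_def scalar_prod_def intro!: sum.cong)
    finally show "(A * Psi) $$ (a,b) = (Psi * D) $$ (a,b)" .
  qed (use A Psi D in auto)
  have "mat_adjoint Psi * A = mat_adjoint Psi * A * (Psi * mat_adjoint Psi)"
    using unitary_other[OF Psi orth] Ps A by simp
  also have "\<dots> = mat_adjoint Psi * (A * Psi) * mat_adjoint Psi"
    using Ps A Psi by (simp add: assoc_mult_mat[of _ N N _ N _ N])
  also have "\<dots> = (mat_adjoint Psi * Psi) * D * mat_adjoint Psi"
    using Ps A Psi D by (simp add: AP assoc_mult_mat[of _ N N _ N _ N])
  also have "\<dots> = D * mat_adjoint Psi" using orth D Ps by simp
  finally have PA: "mat_adjoint Psi * A = D * mat_adjoint Psi" .
  have "mat_adjoint Psi *\<^sub>v (A *\<^sub>v u) = (mat_adjoint Psi * A) *\<^sub>v u" using Ps A u by simp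
  also have "\<dots> = D *\<^sub>v (mat_adjoint Psi *\<^sub>v u)" using PA D Ps u by simp
  finally have "(mat_adjoint Psi *\<^sub>v (A *\<^sub>v u)) $ i = (D *\<^sub>v (mat_adjoint Psi *\<^sub>v u)) $ i" by simp
  also have "\<dots> = row D i \<bullet> (mat_adjoint Psi *\<^sub>v u)" using i D by simp
  also have "\<dots> = (\<Sum>k\<in>{0..<N}. (if i = k then lam i else 0) * (mat_adjoint Psi *\<^sub>v u) $ k)"
    using i D Ps u Psi by (simp add: D_def scalar_prod_def del: index_mult_mat_vec)
  also have "\<dots> = lam i * (mat_adjoint Psi *\<^sub>v u) $ i" using i
    by (simp add: if_distrib[of "\<lambda>x. x * _"] sum.delta cong: if_cong)
  finally show ?thesis .
qed

lemma le_index: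
  assumes Psi: "Psi \<in> carrier_mat N N" and mN: "m \<le> N" and v: "v \<in> carrier_vec N" and i: "i < m"
  shows "(mat_adjoint (Psi_le Psi m) *\<^sub>v v) $ i = (mat_adjoint Psi *\<^sub>v v) $ i"
  using i mN
  by (simp add: adj_mult_vec_index[OF Psi_le_carrier[OF Psi] v]
        adj_mult_vec_index[OF Psi v]) (use Psi in \<open>auto simp: Psi_le_def intro!: sum.cong\<close>)

lemma gt_index:
  assumes Psi: "Psi \<in> carrier_mat N N" and mN: "m \<le> N" and v: "v \<in> carrier_vec N" and i: "i < N - m"
  shows "(mat_adjoint (Psi_gt Psi m) *\<^sub>v v) $ i = (mat_adjoint Psi *\<^sub>v v) $ (i + m)"
  using i mN
  by (simp add: adj_mult_vec_index[OF Psi_gt_carrier[OF Psi] v]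
        adj_mult_vec_index[OF Psi v]) (use Psi in \<open>auto simp: Psi_gt_def intro!: sum.cong\<close>)

lemma le_A:
  fixes A Psi :: "complex mat" and lam :: "nat \<Rightarrow> complex"
  assumes A: "A \<in> carrier_mat N N" and Psi: "Psi \<in> carrier_mat N N"
    and orth: "mat_adjoint Psi * Psi = 1\<^sub>m N"
    and eig: "\<forall>j<N. A *\<^sub>v col Psi j = lam j \<cdot>\<^sub>v col Psi j"
    and mN: "m \<le> N" and u: "u \<in> carrier_vec N"
    and mu: "0 \<le> mu" "\<forall>i<m. mu \<le> cmod (lam i)"
  shows "mu * vnorm (mat_adjoint (Psi_le Psi m) *\<^sub>v u) \<le> vnorm (mat_adjoint (Psi_le Psi m) *\<^sub>v (A *\<^sub>v u))"
proof -
  have Au: "A *\<^sub>v u \<in> carrier_vec N" using A u by simp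
  have "mu * vnorm (mat_adjoint (Psi_le Psi m) *\<^sub>v u)
     = L2_set (\<lambda>i. mu * cmod ((mat_adjoint (Psi_le Psi m) *\<^sub>v u) $ i)) {..<m}"
    unfolding vnorm_L2 using Psi_le_carrier[OF Psi, of m] mu by (simp add: L2_set_right_distrib)
  also have "\<dots> \<le> L2_set (\<lambda>i. cmod ((mat_adjoint (Psi_le Psi m) *\<^sub>v (A *\<^sub>v u)) $ i)) {..<m}"
  proof (rule L2_set_mono)
    fix i assume "i \<in> {..<m}"
    hence i: "i < m" by simp
    have "(mat_adjoint (Psi_le Psi m) *\<^sub>v (A *\<^sub>v u)) $ i = lam i * (mat_adjoint (Psi_le Psi m) *\<^sub>v u) $ i"
      using le_index[OF Psi mN Au i] le_index[OF Psi mN u i] eig_coords[OF A Psi orth eig u] i mN by simp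
    thus "mu * cmod ((mat_adjoint (Psi_le Psi m) *\<^sub>v u) $ i)
          \<le> cmod ((mat_adjoint (Psi_le Psi m) *\<^sub>v (A *\<^sub>v u)) $ i)"
      using mu i by (simp add: norm_mult mult_right_mono)
  qed (use mu in simp)
  also have "\<dots> = vnorm (mat_adjoint (Psi_le Psi m) *\<^sub>v (A *\<^sub>v u))"
    unfolding vnorm_L2 using Psi_le_carrier[OF Psi, of m] by simp
  finally show ?thesis .
qed

lemma gt_A:
  fixes A Psi :: "complex mat" and lam :: "nat \<Rightarrow> complex"
  assumes A: "A \<in> carrier_mat N N" and Psi: "Psi \<in> carrier_mat N N"
    and orth: "mat_adjoint Psi * Psi = 1\<^sub>m N"
    and eig: "\<forall>j<N. A *\<^sub>v col Psi j = lam j \<cdot>\<^sub>v col Psi j"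
    and mN: "m \<le> N" and u: "u \<in> carrier_vec N"
    and nu: "0 \<le> nu" "\<forall>i. m \<le> i \<and> i < N \<longrightarrow> cmod (lam i) \<le> nu"
  shows "vnorm (mat_adjoint (Psi_gt Psi m) *\<^sub>v (A *\<^sub>v u)) \<le> nu * vnorm (mat_adjoint (Psi_gt Psi m) *\<^sub>v u)"
proof -
  have Au: "A *\<^sub>v u \<in> carrier_vec N" using A u by simp
  have "vnorm (mat_adjoint (Psi_gt Psi m) *\<^sub>v (A *\<^sub>v u))
     = L2_set (\<lambda>i. cmod ((mat_adjoint (Psi_gt Psi m) *\<^sub>v (A *\<^sub>v u)) $ i)) {..<N-m}"
    unfolding vnorm_L2 using Psi_gt_carrier[OF Psi, of m] by simp
  also have "\<dots> \<le> L2_set (\<lambda>i. nu * cmod ((mat_adjoint (Psi_gt Psi m) *\<^sub>v u) $ i)) {..<N-m}"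
  proof (rule L2_set_mono)
    fix i assume "i \<in> {..<N-m}"
    hence i: "i < N - m" by simp
    have "(mat_adjoint (Psi_gt Psi m) *\<^sub>v (A *\<^sub>v u)) $ i = lam (i+m) * (mat_adjoint (Psi_gt Psi m) *\<^sub>v u) $ i"
      using gt_index[OF Psi mN Au i] gt_index[OF Psi mN u i] eig_coords[OF A Psi orth eig u, of "i+m"] i mN by simp
    moreover have "cmod (lam (i+m)) \<le> nu" using nu i by simp
    ultimately show "cmod ((mat_adjoint (Psi_gt Psi m) *\<^sub>v (A *\<^sub>v u)) $ i)
          \<le> nu * cmod ((mat_adjoint (Psi_gt Psi m) *\<^sub>v u) $ i)"
      by (simp add: norm_mult mult_right_mono)
  qed simp
  also have "\<dots> = nu * vnorm (mat_adjoint (Psi_gt Psi m) *\<^sub>v u)"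
    unfolding vnorm_L2 using Psi_gt_carrier[OF Psi, of m] nu by (simp add: L2_set_right_distrib)
  finally show ?thesis .
qed

lemma minv_props:
  assumes inv: "invertible_mat M" and M: "M \<in> carrier_mat n n"
  shows "minv M \<in> carrier_mat n n \<and> M * minv M = 1\<^sub>m n \<and> minv M * M = 1\<^sub>m n"
proof -
  obtain B where MB: "inverts_mat M B" and BM: "inverts_mat B M"
    using inv unfolding invertible_mat_def by blast
  have B: "B \<in> carrier_mat n n" using MB BM M unfolding inverts_mat_def
    by (metis carrier_matD(1) carrier_matD(2) carrier_mat_triv index_mult_mat(3) index_one_mat(3))
  have ex: "\<exists>B. B \<in> carrier_mat (dim_row M) (dim_row M) \<and> M * B = 1\<^sub>m (dim_row M) \<and> B * M = 1\<^sub>m (dim_row M)"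
    using B MB BM M unfolding inverts_mat_def by (intro exI[of _ B]) auto
  show ?thesis using someI_ex[OF ex] M unfolding minv_def by auto
qed

lemma det_invertible:
  assumes M: "M \<in> carrier_mat n n" and d: "det M \<noteq> (0::complex)"
  shows "invertible_mat M"
proof -
  have "M \<in> Units (ring_mat TYPE(complex) n ())" by (rule det_non_zero_imp_unit[OF M d])
  then obtain B where B: "B \<in> carrier_mat n n" "M * B = 1\<^sub>m n" "B * M = 1\<^sub>m n"
    unfolding Units_def ring_mat_def by auto
  thus ?thesis using M unfolding invertible_mat_def inverts_mat_def square_mat.simps by auto
qed

theorem theorem4:
  fixes A Psi V Phi E V' :: "complex mat" and lam :: "nat \<Rightarrow> complex" and N m :: nat
  assumes A: "A \<in> carrier_mat N N"
    and Psi: "Psi \<in> carrier_mat N N"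
    and orthonormal: "mat_adjoint Psi * Psi = 1\<^sub>m N"
    and eig: "\<forall>j<N. A *\<^sub>v col Psi j = lam j \<cdot>\<^sub>v col Psi j"
    and ordered: "\<forall>i j. i \<le> j \<and> j < N \<longrightarrow> cmod (lam j) \<le> cmod (lam i)"
    and m: "1 \<le> m" "m < N"
    and lam_m: "lam (m - 1) \<noteq> 0"
    and V: "V \<in> carrier_mat N m"
    and V_inv: "invertible_mat (mat_adjoint (Psi_le Psi m) * V)"
    and Phi: "Phi \<in> carrier_mat m m" "invertible_mat Phi"
    and E: "E \<in> carrier_mat N m"
    and V': "V' = A * V * Phi + E"
    and bound: "spec_norm E / cmod (lam (m - 1)) <
      (1 / cond2 (mat_adjoint (Psi_le Psi m) * V * Phi) - cmod (lam m / lam (m - 1)))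
      * spec_norm (mat_adjoint (Psi_le Psi m) * V * Phi)
      * spec_norm (mat_adjoint (Psi_gt Psi m) * V * Phi)
      / spec_norm (V * Phi)"
  shows "theta Psi m V' < theta Psi m V"
proof -
  have mN: "m \<le> N" and m0: "0 < m" using m by auto
  define Pl where "Pl = mat_adjoint (Psi_le Psi m)"
  define Pg where "Pg = mat_adjoint (Psi_gt Psi m)"
  have Pl: "Pl \<in> carrier_mat m N" unfolding Pl_def by (rule adj_carrier[OF Psi_le_carrier[OF Psi]])
  have Pg: "Pg \<in> carrier_mat (N-m) N" unfolding Pg_def by (rule adj_carrier[OF Psi_gt_carrier[OF Psi]])
  define W where "W = V * Phi"
  define X0 where "X0 = Pl * V"
  define Y0 where "Y0 = Pg * V"
  define X where "X = Pl * V * Phi"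
  define Y where "Y = Pg * V * Phi"
  have W: "W \<in> carrier_mat N m" using V Phi unfolding W_def by auto
  have X0: "X0 \<in> carrier_mat m m" using Pl V unfolding X0_def by auto
  have Y0: "Y0 \<in> carrier_mat (N-m) m" using Pg V unfolding Y0_def by auto
  have X: "X \<in> carrier_mat m m" using Pl V Phi unfolding X_def by auto
  have Y: "Y \<in> carrier_mat (N-m) m" using Pg V Phi unfolding Y_def by auto
  have V'c: "V' \<in> carrier_mat N m" using A V Phi E V' by auto
  define X' where "X' = Pl * V'"
  define Y' where "Y' = Pg * V'"
  have X': "X' \<in> carrier_mat m m" using Pl V'c unfolding X'_def by auto
  have Y': "Y' \<in> carrier_mat (N-m) m" using Pg V'c unfolding Y'_def by auto
  define Mi where "Mi = minv X0"
  have Mi: "Mi \<in> carrier_mat m m" "X0 * Mi = 1\<^sub>m m" "Mi * X0 = 1\<^sub>m m"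
    using minv_props[OF V_inv[folded Pl_def, folded X0_def] X0] unfolding Mi_def by auto
  define tau where "tau = spec_norm (Y0 * Mi)"
  have thV: "theta Psi m V = arctan tau"
    using V_inv unfolding theta_def tan_theta_def tau_def Mi_def X0_def Y0_def Pl_def Pg_def by simp
  have YMi: "Y0 * Mi \<in> carrier_mat (N-m) m" using Y0 Mi by auto
  have tau0: "tau \<ge> 0" unfolding tau_def using YMi m0 by (intro spec_norm_nonneg) auto

  have ha: "vnorm (Y0 *\<^sub>v w) \<le> tau * vnorm (X0 *\<^sub>v w)" if w: "w \<in> carrier_vec m" for w
  proof -
    have "(Y0 * Mi) *\<^sub>v (X0 *\<^sub>v w) = Y0 *\<^sub>v (Mi *\<^sub>v (X0 *\<^sub>v w))"
      using Y0 Mi X0 w by (simp add: assoc_mult_mat_vec[OF Y0 Mi(1)])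
    also have "Mi *\<^sub>v (X0 *\<^sub>v w) = w"
      using assoc_mult_mat_vec[OF Mi(1) X0 w, symmetric] Mi(3) w by simp
    finally have "Y0 *\<^sub>v w = (Y0 * Mi) *\<^sub>v (X0 *\<^sub>v w)" by simp
    thus ?thesis unfolding tau_def using spec_norm_upper[OF YMi, of "X0 *\<^sub>v w"] X0 w by simp
  qed

  have zfacts: "X *\<^sub>v z = X0 *\<^sub>v (Phi *\<^sub>v z) \<and> Y *\<^sub>v z = Y0 *\<^sub>v (Phi *\<^sub>v z)
     \<and> X *\<^sub>v z = Pl *\<^sub>v (W *\<^sub>v z) \<and> Y *\<^sub>v z = Pg *\<^sub>v (W *\<^sub>v z)" if z: "z \<in> carrier_vec m" for z
  proof -
    have w: "Phi *\<^sub>v z \<in> carrier_vec m" using Phi z by auto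
    note e1 = assoc_mult_mat_vec[OF mult_carrier_mat[OF Pl V] Phi(1) z]
    note e2 = assoc_mult_mat_vec[OF mult_carrier_mat[OF Pg V] Phi(1) z]
    note e3 = assoc_mult_mat_vec[OF Pl V w]
    note e4 = assoc_mult_mat_vec[OF Pg V w]
    note e5 = assoc_mult_mat_vec[OF V Phi(1) z]
    show ?thesis unfolding X_def Y_def X0_def Y0_def W_def e1 e2 e3 e4 e5 by simp
  qed

  have hi: "vnorm (Y *\<^sub>v z) \<le> tau * vnorm (X *\<^sub>v z)" if z: "z \<in> carrier_vec m" for z
    using ha[of "Phi *\<^sub>v z"] zfacts[OF z] z Phi by auto
  have hii: "(vnorm (X *\<^sub>v z))\<^sup>2 + (vnorm (Y *\<^sub>v z))\<^sup>2 = (vnorm (W *\<^sub>v z))\<^sup>2" if z: "z \<in> carrier_vec m" for z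
    using split_norm[OF Psi orthonormal mN, of "W *\<^sub>v z"] zfacts[OF z] z W unfolding Pl_def Pg_def by auto

  define nX where "nX = spec_norm X"
  define nY where "nY = spec_norm Y"
  define nW where "nW = spec_norm W"
  define nE where "nE = spec_norm E"
  define sX where "sX = smin X"
  have nX0: "nX \<ge> 0" unfolding nX_def using X m0 by (intro spec_norm_nonneg) auto
  have nY0: "nY \<ge> 0" unfolding nY_def using Y m0 by (intro spec_norm_nonneg) auto
  have nW0: "nW \<ge> 0" unfolding nW_def using W m0 by (intro spec_norm_nonneg) auto
  have nE0: "nE \<ge> 0" unfolding nE_def using E m0 by (intro spec_norm_nonneg) auto

  have hY1: "nY \<le> tau * nX" unfolding nY_def
  proof (rule spec_norm_least)
    show "0 < dim_col Y" using Y m0 by simp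
    fix z assume z: "z \<in> carrier_vec (dim_col Y)" "vnorm z = 1"
    hence zc: "z \<in> carrier_vec m" using Y by simp
    have "vnorm (Y *\<^sub>v z) \<le> tau * vnorm (X *\<^sub>v z)" by (rule hi[OF zc])
    also have "\<dots> \<le> tau * nX" using spec_norm_upper[OF X zc] z tau0 unfolding nX_def
      by (simp add: mult_left_mono)
    finally show "vnorm (Y *\<^sub>v z) \<le> tau * nX" .
  qed

  define s where "s = sqrt (1 + tau\<^sup>2)"
  have s1: "s \<ge> 1" unfolding s_def by simp
  have s2: "s\<^sup>2 = 1 + tau\<^sup>2" unfolding s_def by (simp add: add_nonneg_nonneg)
  have hY2: "nY * s \<le> tau * nW"
  proof -
    have "nY \<le> tau * nW / s" unfolding nY_def
    proof (rule spec_norm_least)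
      show "0 < dim_col Y" using Y m0 by simp
      fix z assume z: "z \<in> carrier_vec (dim_col Y)" "vnorm z = 1"
      hence zc: "z \<in> carrier_vec m" using Y by simp
      have a1: "(vnorm (Y *\<^sub>v z))\<^sup>2 \<le> tau\<^sup>2 * (vnorm (X *\<^sub>v z))\<^sup>2"
      proof -
        have "(vnorm (Y *\<^sub>v z))\<^sup>2 \<le> (tau * vnorm (X *\<^sub>v z))\<^sup>2"
          using hi[OF zc] by (intro power_mono) auto
        thus ?thesis by (simp add: power_mult_distrib)
      qed
      have a2: "vnorm (W *\<^sub>v z) \<le> nW" using spec_norm_upper[OF W zc] z unfolding nW_def by simp
      have a3: "(vnorm (W *\<^sub>v z))\<^sup>2 \<le> nW\<^sup>2" using a2 by (simp add: power_mono)
      have "(vnorm (Y *\<^sub>v z) * s)\<^sup>2 = (vnorm (Y *\<^sub>v z))\<^sup>2 + tau\<^sup>2 * (vnorm (Y *\<^sub>v z))\<^sup>2"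
        by (simp add: power_mult_distrib s2 algebra_simps)
      also have "\<dots> \<le> tau\<^sup>2 * ((vnorm (X *\<^sub>v z))\<^sup>2 + (vnorm (Y *\<^sub>v z))\<^sup>2)"
        using a1 by (simp add: algebra_simps)
      also have "\<dots> = tau\<^sup>2 * (vnorm (W *\<^sub>v z))\<^sup>2" using hii[OF zc] by simp
      also have "\<dots> \<le> (tau * nW)\<^sup>2" using a3 by (simp add: power_mult_distrib mult_left_mono)
      finally have c: "(vnorm (Y *\<^sub>v z) * s)\<^sup>2 \<le> (tau * nW)\<^sup>2" .
      have "vnorm (Y *\<^sub>v z) * s \<le> tau * nW"
        by (rule power2_le_imp_le[OF c]) (simp add: tau0 nW0)
      thus "vnorm (Y *\<^sub>v z) \<le> tau * nW / s" using s1 by (simp add: le_divide_eq)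
    qed
    thus ?thesis using s1 by (simp add: le_divide_eq)
  qed

  define mu where "mu = cmod (lam (m - 1))"
  define nu where "nu = cmod (lam m)"
  have mu0: "mu > 0" unfolding mu_def using lam_m by simp
  have nu0: "nu \<ge> 0" unfolding nu_def by simp
  have mu_le: "\<forall>i<m. mu \<le> cmod (lam i)"
  proof (intro allI impI)
    fix i assume "i < m"
    thus "mu \<le> cmod (lam i)" unfolding mu_def using ordered[rule_format, of i "m-1"] m by linarith
  qed
  have nu_ge: "\<forall>i. m \<le> i \<and> i < N \<longrightarrow> cmod (lam i) \<le> nu" unfolding nu_def using ordered by auto
  have ratio: "cmod (lam m / lam (m - 1)) = nu / mu" unfolding mu_def nu_def by (simp add: norm_divide)
  have cond: "1 / cond2 X = sX / nX" unfolding cond2_def sX_def nX_def by simp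
  define R where "R = (sX / nX - nu / mu) * nX * nY / nW"
  have bnd: "nE / mu < R" using bound unfolding R_def ratio[symmetric] cond[symmetric]
    unfolding nE_def mu_def X_def nX_def nY_def nW_def Y_def W_def Pl_def Pg_def .
  have R0: "R > 0" using bnd nE0 mu0 by (smt (verit) divide_nonneg_pos)
  have nXp: "nX > 0" using R0 nX0 unfolding R_def by (cases "nX = 0") auto
  have nWp: "nW > 0" using R0 nW0 unfolding R_def by (cases "nW = 0") auto
  have nYp: "nY > 0" using R0 nY0 unfolding R_def by (cases "nY = 0") auto
  define P where "P = mu * sX - nu * nX"
  have RP: "R = P * nY / (mu * nW)" unfolding R_def P_def using nXp mu0 nWp
    by (simp add: field_simps)
  have P0: "P > 0" using R0 nYp nWp mu0 unfolding RP
    by (simp add: zero_less_divide_iff zero_less_mult_iff) (smt (verit) mult_pos_pos mult_nonneg_nonneg)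
  have bnd2: "nE < P * nY / nW" using bnd mu0 nWp unfolding RP by (simp add: field_simps)
  define delta where "delta = tau * mu * sX - nu * nY - s * nE"
  have delta0: "delta > 0"
  proof -
    have "s * nE < s * (P * nY / nW)" using bnd2 s1 by (intro mult_strict_left_mono) auto
    also have "\<dots> = P * (nY * s) / nW" by simp
    also have "\<dots> \<le> P * (tau * nW) / nW" using hY2 P0 nWp by (intro divide_right_mono mult_left_mono) auto
    also have "\<dots> = tau * P" using nWp by simp
    also have "\<dots> = tau * mu * sX - nu * (tau * nX)" unfolding P_def by (simp add: algebra_simps)
    also have "\<dots> \<le> tau * mu * sX - nu * nY" using hY1 nu0 by (simp add: mult_left_mono)
    finally show ?thesis unfolding delta_def by simp
  qed

  have key: "delta * vnorm z \<le> tau * vnorm (X' *\<^sub>v z) - vnorm (Y' *\<^sub>v z)" if z: "z \<in> carrier_vec m" for z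
  proof -
    define u where "u = W *\<^sub>v z"
    define e where "e = E *\<^sub>v z"
    have u: "u \<in> carrier_vec N" unfolding u_def using W z by simp
    have e: "e \<in> carrier_vec N" unfolding e_def using E z by simp
    have Au: "A *\<^sub>v u \<in> carrier_vec N" using A u by simp
    have V'z: "V' *\<^sub>v z = A *\<^sub>v u + e"
    proof -
      have "V' *\<^sub>v z = (A * V * Phi) *\<^sub>v z + E *\<^sub>v z"
        unfolding V' using add_mult_distrib_mat_vec[OF _ E z, of "A * V * Phi"] A V Phi by auto
      also have "(A * V * Phi) *\<^sub>v z = A *\<^sub>v u"
        unfolding u_def W_def using A V Phi z
        by (metis assoc_mult_mat mult_carrier_mat assoc_mult_mat_vec)
      finally show ?thesis unfolding e_def .
    qed
    have X'z: "X' *\<^sub>v z = Pl *\<^sub>v (A *\<^sub>v u) + Pl *\<^sub>v e"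
      unfolding X'_def using assoc_mult_mat_vec[OF Pl V'c z] V'z mult_add_distrib_mat_vec[OF Pl Au e] by simp
    have Y'z: "Y' *\<^sub>v z = Pg *\<^sub>v (A *\<^sub>v u) + Pg *\<^sub>v e"
      unfolding Y'_def using assoc_mult_mat_vec[OF Pg V'c z] V'z mult_add_distrib_mat_vec[OF Pg Au e] by simp
    define g where "g = vnorm (Pl *\<^sub>v e)"
    define h where "h = vnorm (Pg *\<^sub>v e)"
    have g0: "g \<ge> 0" and h0: "h \<ge> 0" unfolding g_def h_def by auto
    have gh: "g\<^sup>2 + h\<^sup>2 = (vnorm e)\<^sup>2"
      using split_norm[OF Psi orthonormal mN e] unfolding g_def h_def Pl_def Pg_def .
    have ez: "vnorm e \<le> nE * vnorm z" unfolding e_def nE_def by (rule spec_norm_upper[OF E z])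
    have ez2: "(vnorm e)\<^sup>2 \<le> (nE * vnorm z)\<^sup>2" using ez by (simp add: power_mono)
    have cs: "tau * g + h \<le> s * (nE * vnorm z)"
    proof -
      have "(tau * g + h)\<^sup>2 \<le> (1 + tau\<^sup>2) * (g\<^sup>2 + h\<^sup>2)"
      proof -
        have "(1 + tau\<^sup>2) * (g\<^sup>2 + h\<^sup>2) - (tau * g + h)\<^sup>2 = (g - tau * h)\<^sup>2"
          by (simp add: power2_eq_square algebra_simps)
        thus ?thesis by (smt (verit) zero_le_power2)
      qed
      also have "\<dots> \<le> (1 + tau\<^sup>2) * (nE * vnorm z)\<^sup>2" using gh ez2 by (simp add: mult_left_mono)
      also have "\<dots> = (s * (nE * vnorm z))\<^sup>2" by (simp add: power_mult_distrib s2)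
      finally have c: "(tau * g + h)\<^sup>2 \<le> (s * (nE * vnorm z))\<^sup>2" .
      show ?thesis by (rule power2_le_imp_le[OF c]) (use s1 nE0 in simp)
    qed
    have Xlow: "mu * sX * vnorm z - g \<le> vnorm (X' *\<^sub>v z)"
    proof -
      have "sX * vnorm z \<le> vnorm (X *\<^sub>v z)" unfolding sX_def by (rule smin_lower[OF X z])
      also have "X *\<^sub>v z = Pl *\<^sub>v u" using zfacts[OF z] unfolding u_def by metis
      finally have "mu * (sX * vnorm z) \<le> mu * vnorm (Pl *\<^sub>v u)" using mu0 by simp
      also have "\<dots> \<le> vnorm (Pl *\<^sub>v (A *\<^sub>v u))"
        unfolding Pl_def by (rule le_A[OF A Psi orthonormal eig mN u _ mu_le]) (use mu0 in simp)
      finally have "mu * sX * vnorm z \<le> vnorm (Pl *\<^sub>v (A *\<^sub>v u))" by simp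
      moreover have "vnorm (Pl *\<^sub>v (A *\<^sub>v u)) - g \<le> vnorm (X' *\<^sub>v z)"
        unfolding X'z g_def using vnorm_minus[of "Pl *\<^sub>v (A *\<^sub>v u)" m "Pl *\<^sub>v e"] Pl Au e by simp
      ultimately show ?thesis by simp
    qed
    have Yup: "vnorm (Y' *\<^sub>v z) \<le> nu * nY * vnorm z + h"
    proof -
      have "vnorm (Y' *\<^sub>v z) \<le> vnorm (Pg *\<^sub>v (A *\<^sub>v u)) + h"
        unfolding Y'z h_def using vnorm_add[of "Pg *\<^sub>v (A *\<^sub>v u)" "N-m" "Pg *\<^sub>v e"] Pg Au e by simp
      also have "vnorm (Pg *\<^sub>v (A *\<^sub>v u)) \<le> nu * vnorm (Pg *\<^sub>v u)"
        unfolding Pg_def by (rule gt_A[OF A Psi orthonormal eig mN u nu0 nu_ge])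
      also have "Pg *\<^sub>v u = Y *\<^sub>v z" using zfacts[OF z] unfolding u_def by metis
      also have "nu * vnorm (Y *\<^sub>v z) \<le> nu * (nY * vnorm z)"
        using spec_norm_upper[OF Y z] nu0 unfolding nY_def by (simp add: mult_left_mono)
      finally show ?thesis by (simp add: algebra_simps)
    qed
    have "tau * (mu * sX * vnorm z - g) \<le> tau * vnorm (X' *\<^sub>v z)" using Xlow tau0 by (simp add: mult_left_mono)
    hence "delta * vnorm z \<le> tau * vnorm (X' *\<^sub>v z) - vnorm (Y' *\<^sub>v z) + (tau * g + h) - s * nE * vnorm z"
      using Yup unfolding delta_def by (simp add: algebra_simps)
    thus ?thesis using cs by (simp add: algebra_simps)
  qed

  have X'inv: "invertible_mat X'"
  proof (rule det_invertible[OF X'], rule ccontr)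
    assume "\<not> det X' \<noteq> 0"
    then obtain z where z: "z \<in> carrier_vec m" "z \<noteq> 0\<^sub>v m" "X' *\<^sub>v z = 0\<^sub>v m"
      using det_0_iff_vec_prod_zero_field[OF X'] by auto
    have zp: "vnorm z > 0" using vnorm_zero_iff[OF z(1)] z(2) vnorm_nonneg[of z] by linarith
    have "vnorm (X' *\<^sub>v z) = 0" using z(3) vnorm_zero_iff[of "X' *\<^sub>v z" m] by simp
    with key[OF z(1)] have "delta * vnorm z \<le> - vnorm (Y' *\<^sub>v z)" by simp
    moreover have "delta * vnorm z > 0" using delta0 zp by simp
    ultimately show False using vnorm_nonneg[of "Y' *\<^sub>v z"] by linarith
  qed
  define Mi' where "Mi' = minv X'"
  have Mi': "Mi' \<in> carrier_mat m m" "X' * Mi' = 1\<^sub>m m" "Mi' * X' = 1\<^sub>m m"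
    using minv_props[OF X'inv X'] unfolding Mi'_def by auto
  have thV': "theta Psi m V' = arctan (spec_norm (Y' * Mi'))"
    using X'inv unfolding theta_def tan_theta_def Mi'_def X'_def Y'_def Pl_def Pg_def by simp
  define nX' where "nX' = spec_norm X'"
  have inv_apply: "X' *\<^sub>v (Mi' *\<^sub>v u) = u" if uc: "u \<in> carrier_vec m" for u
    using assoc_mult_mat_vec[OF X' Mi'(1) uc, symmetric] Mi'(2) uc by simp
  have nX'p: "nX' > 0"
  proof -
    let ?u = "unit_vec m 0"
    have uc: "?u \<in> carrier_vec m" by simp
    have "vnorm ?u = 1" using vnorm_unit_vec[of m 0] m0 by simp
    hence "1 \<le> nX' * vnorm (Mi' *\<^sub>v ?u)"
      using spec_norm_upper[OF X', of "Mi' *\<^sub>v ?u"] inv_apply[OF uc] Mi'(1) unfolding nX'_def by simp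
    moreover have "nX' \<ge> 0" unfolding nX'_def using X' m0 by (intro spec_norm_nonneg) auto
    ultimately show ?thesis by (cases "nX' = 0") auto
  qed
  have "spec_norm (Y' * Mi') \<le> tau - delta / nX'"
  proof (rule spec_norm_least)
    show "0 < dim_col (Y' * Mi')" using Mi' m0 by simp
    fix u assume u: "u \<in> carrier_vec (dim_col (Y' * Mi'))" "vnorm u = 1"
    hence uc: "u \<in> carrier_vec m" using Mi' by simp
    define z where "z = Mi' *\<^sub>v u"
    have zc: "z \<in> carrier_vec m" unfolding z_def using Mi' uc by simp
    have Xz: "X' *\<^sub>v z = u" unfolding z_def by (rule inv_apply[OF uc])
    have YM: "(Y' * Mi') *\<^sub>v u = Y' *\<^sub>v z" unfolding z_def by (rule assoc_mult_mat_vec[OF Y' Mi'(1) uc])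
    have "1 \<le> nX' * vnorm z" using spec_norm_upper[OF X' zc] Xz u(2) unfolding nX'_def by simp
    hence "1 / nX' \<le> vnorm z" using nX'p by (simp add: divide_le_eq mult.commute)
    hence "delta / nX' \<le> delta * vnorm z" using delta0
      by (metis less_eq_real_def mult_left_mono times_divide_eq_right mult_1_right)
    moreover have "delta * vnorm z \<le> tau - vnorm (Y' *\<^sub>v z)" using key[OF zc] Xz u(2) by simp
    ultimately show "vnorm ((Y' * Mi') *\<^sub>v u) \<le> tau - delta / nX'" unfolding YM by simp
  qed
  moreover have "delta / nX' > 0" using delta0 nX'p by simp
  ultimately have "spec_norm (Y' * Mi') < tau" by simp
  thus ?thesis using thV thV' by (simp add: arctan_less_iff)
qed

end
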